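(* Let $G$ be a group, $\hat\phi$ a quasimorphism on $G$, and $\hat\phi_{\mathrm h}$ its homogenization. Set $D'_G(\hat\phi)=\sup\{|\hat\phi(g_1g_2g_1^{-1})-\hat\phi(g_2)|: g_1,g_2\in G\}$. Then $D(\hat\phi_{\mathrm h})\le D(\hat\phi)+\tfrac12D'_G(\hat\phi)$.
   Context: A quasimorphism on $G$ is $\hat\phi\colon G\to\mathbb{R}$ with finite defect $D(\hat\phi)=\sup_{g_1,g_2\in G}|\hat\phi(g_1g_2)-\hat\phi(g_1)-\hat\phi(g_2)|$. Its homogenization is $\hat\phi_{\mathrm h}(g)=\lim_{n\to\infty}\hat\phi(g^n)/n$, the unique homogeneous quasimorphism (i.e. $\hat\phi_{\mathrm h}(g^n)=n\hat\phi_{\mathrm h}(g)$ for all $n\in\mathbb{Z}$) at bounded distance from $\hat\phi$. *)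

theory Defs
  imports "HOL-Analysis.Analysis" "HOL-Algebra.Group"
begin

definition defect :: "('a, 'b) monoid_scheme \<Rightarrow> ('a \<Rightarrow> real) \<Rightarrow> real" where
  "defect G f = (SUP p \<in> carrier G \<times> carrier G.
      \<bar>f (fst p \<otimes>\<^bsub>G\<^esub> snd p) - f (fst p) - f (snd p)\<bar>)"

definition quasimorphism :: "('a, 'b) monoid_scheme \<Rightarrow> ('a \<Rightarrow> real) \<Rightarrow> bool" where
  "quasimorphism G f \<longleftrightarrow> (\<exists>C. \<forall>g1\<in>carrier G. \<forall>g2\<in>carrier G.
      \<bar>f (g1 \<otimes>\<^bsub>G\<^esub> g2) - f g1 - f g2\<bar> \<le> C)"

definition homogenization :: "('a, 'b) monoid_scheme \<Rightarrow> ('a \<Rightarrow> real) \<Rightarrow> 'a \<Rightarrow> real" where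
  "homogenization G f g = lim (\<lambda>n::nat. f (g [^]\<^bsub>G\<^esub> n) / real n)"

definition conj_defect :: "('a, 'b) monoid_scheme \<Rightarrow> ('a \<Rightarrow> real) \<Rightarrow> real" where
  "conj_defect G f = (SUP p \<in> carrier G \<times> carrier G.
      \<bar>f (fst p \<otimes>\<^bsub>G\<^esub> snd p \<otimes>\<^bsub>G\<^esub> inv\<^bsub>G\<^esub> (fst p)) - f (snd p)\<bar>)"

end

theory Submission
  imports Defs "HOL-Real_Asymp.Real_Asymp"
begin

lemma quasi_seq_convergent:
  fixes s :: "nat \<Rightarrow> real"
  assumes q: "\<And>m n. \<bar>s (m + n) - s m - s n\<bar> \<le> D"
  shows "convergent (\<lambda>n. s n / real n)"
proof -
  have D0: "D \<ge> 0" using q[of 0 0] by simp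
  have mult: "\<bar>s (k * n) - real k * s n\<bar> \<le> (real k + 1) * D" for k n
  proof (induction k)
    case 0 then show ?case using q[of 0 0] by (simp add: abs_le_iff)
  next
    case (Suc k)
    have "\<bar>s (n + k * n) - s n - s (k*n)\<bar> \<le> D" by (rule q)
    then show ?case using Suc by (simp add: algebra_simps abs_le_iff)
  qed
  have close: "\<bar>s m / real m - s n / real n\<bar> \<le> 2 * D / real m + 2 * D / real n"
    if "m \<ge> 1" "n \<ge> 1" for m n
  proof -
    have m0: "real m > 0" and n0: "real n > 0" using that by auto
    have mn1: "D * real n \<le> D * (real m * real n)" and mn2: "D * real m \<le> D * (real m * real n)"
      using that D0 by (auto intro!: mult_left_mono)
    have a1: "\<bar>s (m * n) - real m * s n\<bar> \<le> (real m + 1) * D" by (rule mult)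
    have a2: "\<bar>s (n * m) - real n * s m\<bar> \<le> (real n + 1) * D" by (rule mult)
    have b1: "\<bar>s (m * n) / (real m * real n) - s n / real n\<bar> \<le> 2 * D / real n"
    proof -
      have "s (m * n) / (real m * real n) - s n / real n = (s (m * n) - real m * s n) / (real m * real n)"
        using m0 n0 by (simp add: field_simps)
      also have "\<bar>\<dots>\<bar> \<le> ((real m + 1) * D) / (real m * real n)"
        using a1 m0 n0 by (simp add: abs_div divide_right_mono)
      also have "\<dots> \<le> 2 * D / real n" using m0 n0 D0 mn1 mn2 by (simp add: field_simps)
      finally show ?thesis .
    qed
    have b2: "\<bar>s (m * n) / (real m * real n) - s m / real m\<bar> \<le> 2 * D / real m"
    proof -
      have "s (m * n) / (real m * real n) - s m / real m = (s (n * m) - real n * s m) / (real m * real n)"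
        using m0 n0 by (simp add: field_simps mult.commute)
      also have "\<bar>\<dots>\<bar> \<le> ((real n + 1) * D) / (real m * real n)"
        using a2 m0 n0 by (simp add: abs_div divide_right_mono)
      also have "\<dots> \<le> 2 * D / real m" using m0 n0 D0 mn1 mn2 by (simp add: field_simps)
      finally show ?thesis .
    qed
    show ?thesis using b1 b2 by linarith
  qed
  have "Cauchy (\<lambda>n. s n / real n)"
  proof (rule metric_CauchyI)
    fix e :: real assume e: "e > 0"
    obtain N :: nat where N: "N > 4 * D / e + 1" by (meson reals_Archimedean2)
    have "0 \<le> 4 * D / e" using D0 e by simp
    then have "real N > 1" using N by linarith
    then have N1: "N \<ge> 1" by simp
    show "\<exists>M. \<forall>m\<ge>M. \<forall>n\<ge>M. dist (s m / real m) (s n / real n) < e"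
    proof (intro exI allI impI)
      fix m n assume m: "m \<ge> N" and n: "n \<ge> N"
      have "2 * D / real m \<le> 2 * D / real N" using m N1 D0 by (simp add: frac_le)
      moreover have "2 * D / real n \<le> 2 * D / real N" using n N1 D0 by (simp add: frac_le)
      moreover have "2 * D / real N < e / 2"
      proof -
        have "4 * D < e * real N" using N e by (simp add: field_simps) 
        then show ?thesis using N1 by (simp add: field_simps)
      qed
      ultimately show "dist (s m / real m) (s n / real n) < e"
        using close[of m n] m n N1 by (simp add: dist_real_def)
    qed
  qed
  then show ?thesis by (simp add: Cauchy_convergent_iff)
qed

lemma bound_lim: "(\<lambda>m::nat. ((D::real) + D'/2) + (2*D - D'/2) / real (2*m+1)) \<longlonglongrightarrow> D + D'/2"
  by real_asymp

context group
begin

lemma qm_bdd: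
  assumes "quasimorphism G f"
  shows "bdd_above ((\<lambda>p. \<bar>f (fst p \<otimes> snd p) - f (fst p) - f (snd p)\<bar>) ` (carrier G \<times> carrier G))"
proof -
  obtain C where C: "\<forall>g1\<in>carrier G. \<forall>g2\<in>carrier G. \<bar>f (g1 \<otimes> g2) - f g1 - f g2\<bar> \<le> C"
    using assms unfolding quasimorphism_def by blast
  show ?thesis by (rule bdd_aboveI[of _ C]) (use C in auto)
qed

lemma def_le:
  assumes "quasimorphism G f" "x \<in> carrier G" "y \<in> carrier G"
  shows "\<bar>f (x \<otimes> y) - f x - f y\<bar> \<le> defect G f"
  unfolding defect_def
  using cSUP_upper[OF _ qm_bdd[OF assms(1)], of "(x,y)"] assms by auto

lemma conj_bdd:
  assumes "quasimorphism G f"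
  shows "bdd_above ((\<lambda>p. \<bar>f (fst p \<otimes> snd p \<otimes> inv (fst p)) - f (snd p)\<bar>) ` (carrier G \<times> carrier G))"
proof -
  obtain C where C: "\<forall>g1\<in>carrier G. \<forall>g2\<in>carrier G. \<bar>f (g1 \<otimes> g2) - f g1 - f g2\<bar> \<le> C"
    using assms unfolding quasimorphism_def by blast
  have "\<bar>f (x \<otimes> y \<otimes> inv x) - f y\<bar> \<le> 4 * C" if x: "x \<in> carrier G" and y: "y \<in> carrier G" for x y
  proof -
    have e1: "\<bar>f (x \<otimes> y \<otimes> inv x) - f (x \<otimes> y) - f (inv x)\<bar> \<le> C" using C x y by auto
    have e2: "\<bar>f (x \<otimes> y) - f x - f y\<bar> \<le> C" using C x y by auto
    have e3: "\<bar>f (x \<otimes> inv x) - f x - f (inv x)\<bar> \<le> C" by (meson C inv_closed x)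
    have e4: "\<bar>f (\<one> \<otimes> \<one>) - f \<one> - f \<one>\<bar> \<le> C" by (metis C one_closed)
    show ?thesis using e1 e2 e3 e4 x by (simp add: abs_le_iff)
  qed
  then show ?thesis by (intro bdd_aboveI[of _ "4 * C"]) auto
qed

lemma conj_le:
  assumes "quasimorphism G f" "x \<in> carrier G" "y \<in> carrier G"
  shows "\<bar>f (x \<otimes> y \<otimes> inv x) - f y\<bar> \<le> conj_defect G f"
  unfolding conj_defect_def
  using cSUP_upper[OF _ conj_bdd[OF assms(1)], of "(x,y)"] assms by auto

lemma step_est:
  assumes qm: "quasimorphism G f" and P: "P \<in> carrier G" and Q: "Q \<in> carrier G" and w: "w \<in> carrier G"
  shows "\<bar>f (P \<otimes> Q \<otimes> inv P \<otimes> w) - f (Q \<otimes> w)\<bar> \<le> 2 * defect G f + conj_defect G f"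
proof -
  have c: "P \<otimes> Q \<otimes> inv P \<in> carrier G" using P Q by auto
  have e1: "\<bar>f (P \<otimes> Q \<otimes> inv P \<otimes> w) - f (P \<otimes> Q \<otimes> inv P) - f w\<bar> \<le> defect G f"
    by (rule def_le[OF qm c w])
  have e2: "\<bar>f (P \<otimes> Q \<otimes> inv P) - f Q\<bar> \<le> conj_defect G f" by (rule conj_le[OF qm P Q])
  have e3: "\<bar>f (Q \<otimes> w) - f Q - f w\<bar> \<le> defect G f" by (rule def_le[OF qm Q w])
  show ?thesis using e1 e2 e3 by (simp add: abs_le_iff)
qed

definition RR :: "'a \<Rightarrow> 'a \<Rightarrow> nat \<Rightarrow> 'a" where
  "RR a b n = a [^] n \<otimes> b [^] n \<otimes> inv ((a \<otimes> b) [^] n)"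

lemma cancel_l: "x \<in> carrier G \<Longrightarrow> y \<in> carrier G \<Longrightarrow> x \<otimes> (inv x \<otimes> y) = y"
  by (simp add: m_assoc[symmetric])
lemma cancel_l2: "x \<in> carrier G \<Longrightarrow> y \<in> carrier G \<Longrightarrow> inv x \<otimes> (x \<otimes> y) = y"
  by (simp add: m_assoc[symmetric])

lemma RR_step:
  fixes n :: nat
  assumes a: "a \<in> carrier G" and b: "b \<in> carrier G"
  defines "A \<equiv> a [^] n" and "B \<equiv> b [^] n" and "C \<equiv> (a \<otimes> b) [^] n"
  defines "P \<equiv> A \<otimes> a \<otimes> a \<otimes> b \<otimes> inv A" and "Q \<equiv> A \<otimes> B \<otimes> inv (A \<otimes> a)"
  shows "RR a b (Suc (Suc n)) = P \<otimes> Q \<otimes> inv P \<otimes> (inv Q \<otimes> RR a b n)"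
proof -
  have [simp]: "A \<in> carrier G" "B \<in> carrier G" "C \<in> carrier G" unfolding A_def B_def C_def using a b by auto
  have bB: "b \<otimes> B = B \<otimes> b" unfolding B_def using b nat_pow_Suc2 by (metis nat_pow_Suc)
  have l: "RR a b (Suc (Suc n)) = A \<otimes> (a \<otimes> (a \<otimes> (B \<otimes> (b \<otimes> (b \<otimes> (inv b \<otimes> (inv a \<otimes> (inv b \<otimes> (inv a \<otimes> inv C)))))))))"
    unfolding RR_def A_def B_def C_def using a b by (simp add: m_assoc inv_mult_group)
  have r: "P \<otimes> Q \<otimes> inv P \<otimes> (inv Q \<otimes> RR a b n) = A \<otimes> (a \<otimes> (a \<otimes> (b \<otimes> (B \<otimes> (inv a \<otimes> (inv b \<otimes> (inv a \<otimes> inv C)))))))"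
    unfolding RR_def P_def Q_def using a b
    by (simp add: m_assoc inv_mult_group cancel_l cancel_l2 A_def[symmetric] B_def[symmetric] C_def[symmetric])
  have bB2: "b \<otimes> (B \<otimes> z) = B \<otimes> (b \<otimes> z)" if "z \<in> carrier G" for z
    using that b by (metis bB m_assoc \<open>B \<in> carrier G\<close>)
  show ?thesis unfolding l r using a b by (simp add: cancel_l bB2)
qed

lemma RR_est:
  assumes qm: "quasimorphism G f" and a: "a \<in> carrier G" and b: "b \<in> carrier G"
  shows "\<bar>f (RR a b (2*m+1)) - f \<one>\<bar> \<le> real m * (2 * defect G f + conj_defect G f)"
proof (induction m)
  case 0
  have "RR a b 1 = \<one>" unfolding RR_def using a b by simp
  then show ?case by simp
next
  case (Suc m)
  define n where "n = 2*m+1"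
  define A where "A = a [^] n"
  define B where "B = b [^] n"
  define P where "P = A \<otimes> a \<otimes> a \<otimes> b \<otimes> inv A"
  define Q where "Q = A \<otimes> B \<otimes> inv (A \<otimes> a)"
  have cA: "A \<in> carrier G" "B \<in> carrier G" unfolding A_def B_def using a b by auto
  have cP: "P \<in> carrier G" "Q \<in> carrier G" unfolding P_def Q_def using a b cA by auto
  have cR: "RR a b n \<in> carrier G" unfolding RR_def using a b by auto
  have eq: "RR a b (2 * Suc m + 1) = P \<otimes> Q \<otimes> inv P \<otimes> (inv Q \<otimes> RR a b n)"
    using RR_step[OF a b, of n] unfolding P_def Q_def A_def B_def n_def
    by (simp add: numeral_eq_Suc)
  have eq2: "Q \<otimes> (inv Q \<otimes> RR a b n) = RR a b n" using cP cR by (simp add: cancel_l)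
  have "\<bar>f (RR a b (2 * Suc m + 1)) - f (RR a b n)\<bar> \<le> 2 * defect G f + conj_defect G f"
    using step_est[OF qm cP(1) cP(2), of "inv Q \<otimes> RR a b n"] cP cR unfolding eq eq2 by auto
  then show ?case using Suc.IH unfolding n_def by (simp add: algebra_simps abs_le_iff)
qed

lemma power_est:
  assumes qm: "quasimorphism G f" and a: "a \<in> carrier G" and b: "b \<in> carrier G"
  shows "\<bar>f (a [^] n) + f (b [^] n) - f ((a \<otimes> b) [^] n)\<bar> \<le> 3 * defect G f + \<bar>f (RR a b n) - f \<one>\<bar>"
proof -
  define A where "A = a [^] n"
  define B where "B = b [^] n"
  define C where "C = (a \<otimes> b) [^] n"
  have c: "A \<in> carrier G" "B \<in> carrier G" "C \<in> carrier G" unfolding A_def B_def C_def using a b by auto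
  have e1: "\<bar>f (A \<otimes> B \<otimes> inv C) - f (A \<otimes> B) - f (inv C)\<bar> \<le> defect G f"
    using def_le[OF qm, of "A \<otimes> B" "inv C"] c by auto
  have e2: "\<bar>f (A \<otimes> B) - f A - f B\<bar> \<le> defect G f" using def_le[OF qm c(1) c(2)] .
  have e3: "\<bar>f (C \<otimes> inv C) - f C - f (inv C)\<bar> \<le> defect G f" using def_le[OF qm c(3), of "inv C"] c by auto
  have e3': "\<bar>f \<one> - f C - f (inv C)\<bar> \<le> defect G f" using e3 c by simp
  have "RR a b n = A \<otimes> B \<otimes> inv C" unfolding RR_def A_def B_def C_def ..
  then show ?thesis using e1 e2 e3' unfolding A_def[symmetric] B_def[symmetric] C_def[symmetric]
    by (smt (verit))
qed

lemma hom_lim: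
  assumes qm: "quasimorphism G f" and g: "g \<in> carrier G"
  shows "(\<lambda>n. f (g [^] n) / real n) \<longlonglongrightarrow> homogenization G f g"
proof -
  have "convergent (\<lambda>n. f (g [^] n) / real n)"
  proof (rule quasi_seq_convergent[where D = "defect G f"])
    fix m n :: nat
    show "\<bar>f (g [^] (m + n)) - f (g [^] m) - f (g [^] n)\<bar> \<le> defect G f"
      using def_le[OF qm, of "g [^] m" "g [^] n"] g by (simp add: nat_pow_mult)
  qed
  then show ?thesis unfolding homogenization_def by (simp add: convergent_LIMSEQ_iff)
qed

lemma hom_defect_pair:
  assumes qm: "quasimorphism G f" and x: "x \<in> carrier G" and y: "y \<in> carrier G"
  shows "\<bar>homogenization G f (x \<otimes> y) - homogenization G f x - homogenization G f y\<bar>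
          \<le> defect G f + conj_defect G f / 2"
proof -
  let ?D = "defect G f" and ?D' = "conj_defect G f"
  let ?h = "homogenization G f"
  define r :: "nat \<Rightarrow> nat" where "r m = 2*m+1" for m
  have sm: "strict_mono r" unfolding r_def by (rule strict_monoI) simp
  have l1: "(\<lambda>m. f (x [^] r m) / real (r m)) \<longlonglongrightarrow> ?h x"
    using LIMSEQ_subseq_LIMSEQ[OF hom_lim[OF qm x] sm] by (simp add: o_def)
  have l2: "(\<lambda>m. f (y [^] r m) / real (r m)) \<longlonglongrightarrow> ?h y"
    using LIMSEQ_subseq_LIMSEQ[OF hom_lim[OF qm y] sm] by (simp add: o_def)
  have l3: "(\<lambda>m. f ((x \<otimes> y) [^] r m) / real (r m)) \<longlonglongrightarrow> ?h (x \<otimes> y)"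
    using LIMSEQ_subseq_LIMSEQ[OF hom_lim[OF qm] sm] x y by (simp add: o_def)
  have l: "(\<lambda>m. \<bar>f (x [^] r m) / real (r m) + f (y [^] r m) / real (r m) - f ((x \<otimes> y) [^] r m) / real (r m)\<bar>)
       \<longlonglongrightarrow> \<bar>?h x + ?h y - ?h (x \<otimes> y)\<bar>"
    by (intro tendsto_intros l1 l2 l3)
  have bnd: "(\<lambda>m::nat. (?D + ?D'/2) + (2*?D - ?D'/2) / real (2*m+1)) \<longlonglongrightarrow> ?D + ?D'/2"
    by (rule bound_lim)
  have le: "\<bar>f (x [^] r m) / real (r m) + f (y [^] r m) / real (r m) - f ((x \<otimes> y) [^] r m) / real (r m)\<bar>
        \<le> (?D + ?D'/2) + (2*?D - ?D'/2) / real (2*m+1)" for m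
  proof -
    have pos: "real (r m) > 0" unfolding r_def by simp
    have "\<bar>f (x [^] r m) + f (y [^] r m) - f ((x \<otimes> y) [^] r m)\<bar> \<le> 3 * ?D + real m * (2 * ?D + ?D')"
      using power_est[OF qm x y, of "r m"] RR_est[OF qm x y, of m] unfolding r_def by linarith
    also have "\<dots> = real (r m) * ((?D + ?D'/2) + (2*?D - ?D'/2) / real (2*m+1))"
      unfolding r_def by (simp add: field_simps)
    finally have "\<bar>f (x [^] r m) + f (y [^] r m) - f ((x \<otimes> y) [^] r m)\<bar> / real (r m)
       \<le> (?D + ?D'/2) + (2*?D - ?D'/2) / real (2*m+1)"
      using pos by (simp add: divide_le_eq mult.commute)
    moreover have "f (x [^] r m) / real (r m) + f (y [^] r m) / real (r m) - f ((x \<otimes> y) [^] r m) / real (r m)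
       = (f (x [^] r m) + f (y [^] r m) - f ((x \<otimes> y) [^] r m)) / real (r m)"
      by (simp add: diff_divide_distrib add_divide_distrib)
    ultimately show ?thesis by (simp add: abs_div)
  qed
  have "\<bar>?h x + ?h y - ?h (x \<otimes> y)\<bar> \<le> ?D + ?D'/2"
    by (rule tendsto_le[OF _ bnd l]) (use le in auto)
  then show ?thesis by (simp add: abs_le_iff)
qed

end

theorem proposition2p15:
  fixes G :: "('a, 'b) monoid_scheme" and f :: "'a \<Rightarrow> real"
  assumes "group G"
    and "quasimorphism G f"
  shows "defect G (homogenization G f) \<le> defect G f + conj_defect G f / 2"
proof -
  interpret group G by (rule assms(1))
  show ?thesis
    unfolding defect_def[of G "homogenization G f"]
  proof (rule cSUP_least)
    show "carrier G \<times> carrier G \<noteq> {}" by auto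
  next
    fix p assume "p \<in> carrier G \<times> carrier G"
    then show "\<bar>homogenization G f (fst p \<otimes>\<^bsub>G\<^esub> snd p) - homogenization G f (fst p) - homogenization G f (snd p)\<bar>
        \<le> defect G f + conj_defect G f / 2"
      using hom_defect_pair[OF assms(2)] by auto
  qed
qed

end
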